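(* Let $R$ be an integral domain satisfying (R$_1$), and let $S$ be an overring of $R$ such that $R \subseteq S$ satisfies going-down. Then $S$ satisfies (R$_1$), every height one prime of $S$ contracts to a height one prime of $R$, and contraction $Q \mapsto Q \cap R$ gives an injective map $\operatorname{Spec}^1(S) \to \operatorname{Spec}^1(R)$ whose image is exactly the set of height one primes $\mathfrak{p}$ of $R$ with $\mathfrak{p}S \neq S$.
   Context: All rings are commutative with identity; an overring of a domain $R$ is a ring between $R$ and its fraction field. A ring extension $A \subseteq B$ satisfies going-down if whenever $\mathfrak{p} \subset \mathfrak{q}$ are primes of $A$ and $Q$ is a prime of $B$ with $Q \cap A = \mathfrak{q}$, there is a prime $P \subseteq Q$ of $B$ with $P \cap A = \mathfrak{p}$. A ring satisfies (R$_1$) if its localization at every height one prime is a valuation domain. $\operatorname{Spec}^1(A)$ denotes the set of height one primes of $A$. *)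

theory Defs
  imports Main
begin

text \<open>Integral domains are modelled as subrings of an ambient field 'k
(every subring of a field is a domain, and every domain embeds in its fraction field).\<close>

definition subring :: "'k::field set \<Rightarrow> bool" where
  "subring A \<longleftrightarrow> 0 \<in> A \<and> 1 \<in> A \<and>
     (\<forall>x\<in>A. \<forall>y\<in>A. x + y \<in> A \<and> x - y \<in> A \<and> x * y \<in> A)"

definition frac_field :: "'k::field set \<Rightarrow> 'k set" where
  "frac_field A = {a / b | a b. a \<in> A \<and> b \<in> A \<and> b \<noteq> 0}"

definition overring :: "'k::field set \<Rightarrow> 'k set \<Rightarrow> bool" where
  "overring R S \<longleftrightarrow> subring R \<and> subring S \<and> R \<subseteq> S \<and> S \<subseteq> frac_field R"

definition ideal_of :: "'k::field set \<Rightarrow> 'k set \<Rightarrow> bool" where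
  "ideal_of A I \<longleftrightarrow> I \<subseteq> A \<and> 0 \<in> I \<and>
     (\<forall>x\<in>I. \<forall>y\<in>I. x + y \<in> I \<and> x - y \<in> I) \<and> (\<forall>a\<in>A. \<forall>x\<in>I. a * x \<in> I)"

definition prime_of :: "'k::field set \<Rightarrow> 'k set \<Rightarrow> bool" where
  "prime_of A P \<longleftrightarrow> ideal_of A P \<and> P \<noteq> A \<and>
     (\<forall>a\<in>A. \<forall>b\<in>A. a * b \<in> P \<longrightarrow> a \<in> P \<or> b \<in> P)"

text \<open>Height one prime of a domain: a nonzero prime with no nonzero prime strictly below it
(in a domain (0) is prime, so this says exactly that the longest chain of primes ending at P
has length one).\<close>
definition height_one_prime :: "'k::field set \<Rightarrow> 'k set \<Rightarrow> bool" where
  "height_one_prime A P \<longleftrightarrow> prime_of A P \<and> P \<noteq> {0} \<and>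
     (\<forall>Q. prime_of A Q \<and> Q \<subseteq> P \<and> Q \<noteq> {0} \<longrightarrow> Q = P)"

definition Spec1 :: "'k::field set \<Rightarrow> 'k set set" where
  "Spec1 A = {P. height_one_prime A P}"

definition localization :: "'k::field set \<Rightarrow> 'k set \<Rightarrow> 'k set" where
  "localization A P = {a / s | a s. a \<in> A \<and> s \<in> A - P}"

definition valuation_domain :: "'k::field set \<Rightarrow> bool" where
  "valuation_domain V \<longleftrightarrow> subring V \<and>
     (\<forall>x\<in>frac_field V. x \<noteq> 0 \<longrightarrow> x \<in> V \<or> inverse x \<in> V)"

definition R1 :: "'k::field set \<Rightarrow> bool" where
  "R1 A \<longleftrightarrow> (\<forall>P. height_one_prime A P \<longrightarrow> valuation_domain (localization A P))"

definition going_down :: "'k::field set \<Rightarrow> 'k set \<Rightarrow> bool" where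
  "going_down A B \<longleftrightarrow> (\<forall>p q Q. prime_of A p \<and> prime_of A q \<and> p \<subseteq> q \<and>
      prime_of B Q \<and> Q \<inter> A = q \<longrightarrow> (\<exists>P. prime_of B P \<and> P \<subseteq> Q \<and> P \<inter> A = p))"

text \<open>Ideal of B generated by X (used for the extended ideal pS).\<close>
definition gen_ideal :: "'k::field set \<Rightarrow> 'k set \<Rightarrow> 'k set" where
  "gen_ideal B X = \<Inter>{I. ideal_of B I \<and> X \<subseteq> I}"

end

theory Submission imports Defs begin

lemma sub_closed:
  assumes "subring A" "x \<in> A" "y \<in> A"
  shows "x + y \<in> A" "x - y \<in> A" "x * y \<in> A"
  using assms unfolding subring_def by auto

lemma sub01: assumes "subring A" shows "0 \<in> A" "1 \<in> A"
  using assms unfolding subring_def by auto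

lemma sub_frac: assumes "subring R" "x \<in> R" shows "x \<in> frac_field R"
proof -
  have "\<exists>a b. x = a / b \<and> a \<in> R \<and> b \<in> R \<and> b \<noteq> 0"
    by (rule exI[of _ x], rule exI[of _ 1]) (use assms sub01[OF assms(1)] in simp)
  then show ?thesis unfolding frac_field_def by blast
qed

lemma frac_div:
  assumes R: "subring R" and x: "x \<in> frac_field R" and y: "y \<in> frac_field R"
  shows "x / y \<in> frac_field R"
proof -
  obtain a b where ab: "x = a/b" "a \<in> R" "b \<in> R" "b \<noteq> 0" using x unfolding frac_field_def by auto
  obtain c d where cd: "y = c/d" "c \<in> R" "d \<in> R" "d \<noteq> 0" using y unfolding frac_field_def by auto
  show ?thesis
  proof (cases "c = 0")
    case True
    then have "y = 0" using cd(1) by simp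
    then show ?thesis using sub_frac[OF R sub01(1)[OF R]] by simp
  next
    case False
    have "x / y = (a*d)/(b*c)" unfolding ab(1) cd(1) using ab(4) cd(4) False by (simp add: divide_simps)
    moreover have "a*d \<in> R" "b*c \<in> R" using ab cd sub_closed[OF R] by auto
    moreover have "b*c \<noteq> 0" using ab(4) False by simp
    ultimately show ?thesis unfolding frac_field_def by blast
  qed
qed

lemma ideal_mem: "ideal_of A I \<Longrightarrow> a \<in> A \<Longrightarrow> x \<in> I \<Longrightarrow> a * x \<in> I"
  unfolding ideal_of_def by auto

lemma ideal_sub: "ideal_of A I \<Longrightarrow> I \<subseteq> A" unfolding ideal_of_def by auto
lemma ideal_0: "ideal_of A I \<Longrightarrow> 0 \<in> I" unfolding ideal_of_def by auto

lemma prime_one: assumes "subring A" "prime_of A P" shows "1 \<notin> P"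
proof
  assume "1 \<in> P"
  have I: "ideal_of A P" using assms(2) unfolding prime_of_def by blast
  have "a \<in> P" if "a \<in> A" for a using ideal_mem[OF I that \<open>1 \<in> P\<close>] by simp
  then have "A \<subseteq> P" by blast
  moreover have "P \<subseteq> A" using ideal_sub[OF I] .
  ultimately show False using assms(2) unfolding prime_of_def by blast
qed

lemma contract_prime:
  assumes R: "subring R" and S: "subring S" and RS: "R \<subseteq> S" and Q: "prime_of S Q"
  shows "prime_of R (Q \<inter> R)"
proof -
  have "1 \<notin> Q" using prime_one[OF S Q] .
  moreover have "1 \<in> R" using sub01[OF R] by simp
  ultimately have ne: "Q \<inter> R \<noteq> R" by blast
  have I: "ideal_of S Q" and pr: "\<forall>a\<in>S. \<forall>b\<in>S. a * b \<in> Q \<longrightarrow> a \<in> Q \<or> b \<in> Q"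
    using Q unfolding prime_of_def by auto
  have "ideal_of R (Q \<inter> R)" unfolding ideal_of_def
  proof (intro conjI ballI)
    show "0 \<in> Q \<inter> R" using I sub01[OF R] unfolding ideal_of_def by auto
  next
    fix x y assume "x \<in> Q \<inter> R" "y \<in> Q \<inter> R"
    then show "x + y \<in> Q \<inter> R" "x - y \<in> Q \<inter> R" using I sub_closed[OF R] unfolding ideal_of_def by auto
  next
    fix a x assume "a \<in> R" "x \<in> Q \<inter> R"
    then show "a * x \<in> Q \<inter> R" using ideal_mem[OF I, of a x] RS sub_closed(3)[OF R] by auto
  qed auto
  then show ?thesis unfolding prime_of_def using ne pr RS by blast
qed

lemma contract_nonzero:
  assumes R: "subring R" and ov: "overring R S" and Q: "prime_of S Q" and nz: "Q \<noteq> {0}"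
  shows "Q \<inter> R \<noteq> {0}"
proof -
  have "0 \<in> Q" using Q unfolding prime_of_def ideal_of_def by auto
  then obtain x where x: "x \<in> Q" "x \<noteq> 0" using nz by blast
  have "x \<in> S" using x Q unfolding prime_of_def ideal_of_def by auto
  then have "x \<in> frac_field R" using ov unfolding overring_def by auto
  then obtain a b where ab: "x = a/b" "a \<in> R" "b \<in> R" "b \<noteq> 0" unfolding frac_field_def by auto
  have "b * x \<in> Q" using ideal_mem[of S Q b x] Q x ab ov unfolding prime_of_def overring_def by auto
  moreover have "b * x = a" using ab by simp
  moreover have "a \<noteq> 0" using ab x by auto
  ultimately show ?thesis using ab by auto
qed

lemma prime_mult_notin:
  assumes "prime_of A P" "s \<in> A" "t \<in> A" "s \<notin> P" "t \<notin> P"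
  shows "s * t \<notin> P"
  using assms unfolding prime_of_def by blast

lemma prime_0: "prime_of A P \<Longrightarrow> 0 \<in> P" unfolding prime_of_def ideal_of_def by auto

lemma loc_sub:
  assumes A: "subring A" and P: "prime_of A P"
  shows "subring (localization A P)"
proof -
  have one: "1 \<in> A - P" using sub01[OF A] prime_one[OF A P] by auto
  have z: "0 \<in> localization A P"
  proof -
    have "\<exists>a s. (0::'a) = a / s \<and> a \<in> A \<and> s \<in> A - P"
      by (rule exI[of _ 0], rule exI[of _ 1]) (use one sub01[OF A] in simp)
    then show ?thesis unfolding localization_def by blast
  qed
  have o: "1 \<in> localization A P"
  proof -
    have "\<exists>a s. (1::'a) = a / s \<and> a \<in> A \<and> s \<in> A - P"
      by (rule exI[of _ 1], rule exI[of _ 1]) (use one in simp)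
    then show ?thesis unfolding localization_def by blast
  qed
  have cl: "x + y \<in> localization A P \<and> x - y \<in> localization A P \<and> x * y \<in> localization A P"
    if x: "x \<in> localization A P" and y: "y \<in> localization A P" for x y
  proof -
    obtain a s where as: "x = a/s" "a \<in> A" "s \<in> A" "s \<notin> P" using x unfolding localization_def by auto
    obtain b t where bt: "y = b/t" "b \<in> A" "t \<in> A" "t \<notin> P" using y unfolding localization_def by auto
    have s0: "s \<noteq> 0" "t \<noteq> 0" using as bt prime_0[OF P] by auto
    have st: "s*t \<in> A - P" using prime_mult_notin[OF P as(3) bt(3) as(4) bt(4)] sub_closed[OF A as(3) bt(3)] by auto
    have e1: "x + y = (a*t + b*s)/(s*t)" "x - y = (a*t - b*s)/(s*t)" "x * y = (a*b)/(s*t)"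
      unfolding as(1) bt(1) using s0 by (simp_all add: divide_simps)
    have m: "a*t + b*s \<in> A" "a*t - b*s \<in> A" "a*b \<in> A" using as bt sub_closed[OF A] by auto
    show ?thesis unfolding localization_def using e1 m st by blast
  qed
  show ?thesis unfolding subring_def using z o cl by blast
qed

lemma sub_loc:
  assumes A: "subring A" and P: "prime_of A P" and x: "x \<in> A"
  shows "x \<in> localization A P"
proof -
  have one: "1 \<in> A - P" using sub01[OF A] prime_one[OF A P] by auto
  have "\<exists>a s. x = a / s \<and> a \<in> A \<and> s \<in> A - P"
    by (rule exI[of _ x], rule exI[of _ 1]) (use one x in simp)
  then show ?thesis unfolding localization_def by blast
qed

lemma frac_mono:
  assumes "A \<subseteq> B" shows "frac_field A \<subseteq> frac_field B"
  using assms unfolding frac_field_def by blast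

lemma frac_loc:
  assumes A: "subring A" and P: "prime_of A P"
  shows "frac_field A \<subseteq> frac_field (localization A P)"
  by (rule frac_mono) (use sub_loc[OF A P] in blast)

lemma val_loc:
  assumes R: "subring R" and R1: "R1 R" and p: "height_one_prime R p"
    and x: "x \<in> frac_field R" and x0: "x \<noteq> 0"
  shows "x \<in> localization R p \<or> inverse x \<in> localization R p"
proof -
  have pp: "prime_of R p" using p unfolding height_one_prime_def by blast
  have "valuation_domain (localization R p)" using R1 p unfolding R1_def by blast
  then show ?thesis using frac_loc[OF R pp] x x0 unfolding valuation_domain_def by blast
qed

lemma key:
  assumes R: "subring R" and R1: "R1 R" and ov: "overring R S"
    and Q: "prime_of S Q" and p: "height_one_prime R (Q \<inter> R)"
  shows "Q = {x \<in> S. \<exists>a t. x = a / t \<and> a \<in> Q \<inter> R \<and> t \<in> R - Q}"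
proof -
  let ?p = "Q \<inter> R"
  have S: "subring S" and RS: "R \<subseteq> S" and SK: "S \<subseteq> frac_field R" using ov unfolding overring_def by auto
  have I: "ideal_of S Q" using Q unfolding prime_of_def by blast
  have QS: "Q \<subseteq> S" using ideal_sub[OF I] .
  have pp: "prime_of R ?p" using p unfolding height_one_prime_def by blast
  have one: "1 \<in> R - Q" using sub01[OF R] prime_one[OF S Q] by auto
  show ?thesis
  proof (intro equalityI subsetI)
    fix x assume xQ: "x \<in> Q"
    have xS: "x \<in> S" using xQ QS by blast
    show "x \<in> {x \<in> S. \<exists>a t. x = a / t \<and> a \<in> Q \<inter> R \<and> t \<in> R - Q}"
    proof (cases "x = 0")
      case True
      have "\<exists>a t. x = a / t \<and> a \<in> Q \<inter> R \<and> t \<in> R - Q"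
        by (rule exI[of _ 0], rule exI[of _ 1]) (use True one prime_0[OF pp] in simp)
      then show ?thesis using xS by blast
    next
      case False
      have xK: "x \<in> frac_field R" using xS SK by blast
      from val_loc[OF R R1 p xK False] show ?thesis
      proof
        assume "x \<in> localization R ?p"
        then obtain a t where at: "x = a/t" "a \<in> R" "t \<in> R" "t \<notin> ?p" unfolding localization_def by auto
        have t0: "t \<noteq> 0" using at(4) prime_0[OF pp] by auto
        have "t * x \<in> Q" using ideal_mem[OF I _ xQ] at(3) RS by blast
        moreover have "t * x = a" using at(1) t0 by simp
        ultimately have "a \<in> ?p" using at by simp
        then show ?thesis using xS at by blast
      next
        assume "inverse x \<in> localization R ?p"
        then obtain a t where at: "inverse x = a/t" "a \<in> R" "t \<in> R" "t \<notin> ?p" unfolding localization_def by auto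
        have t0: "t \<noteq> 0" using at(4) prime_0[OF pp] by auto
        have a0: "a \<noteq> 0" using at(1) False t0 by auto
        have "a * x \<in> Q" using ideal_mem[OF I _ xQ] at(2) RS by blast
        moreover have "a * x = t"
        proof -
          have "x = t / a" using at(1) False t0 a0 by (metis inverse_divide inverse_inverse_eq)
          then show ?thesis using a0 by simp
        qed
        ultimately have "t \<in> ?p" using at by simp
        then show ?thesis using at by blast
      qed
    qed
  next
    fix x assume "x \<in> {x \<in> S. \<exists>a t. x = a / t \<and> a \<in> Q \<inter> R \<and> t \<in> R - Q}"
    then obtain a t where at: "x \<in> S" "x = a/t" "a \<in> ?p" "t \<in> R" "t \<notin> Q" by blast
    have t0: "t \<noteq> 0" using at(5) prime_0[OF Q] by auto
    have "x * t = a" using at(2) t0 by simp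
    then have "x * t \<in> Q" using at(3) by simp
    moreover have "t \<in> S" using at(4) RS by blast
    ultimately show "x \<in> Q" using Q at(1,5) unfolding prime_of_def by blast
  qed
qed

lemma ideal_add: "ideal_of A I \<Longrightarrow> x \<in> I \<Longrightarrow> y \<in> I \<Longrightarrow> x + y \<in> I"
  unfolding ideal_of_def by auto

lemma ext_ideal:
  assumes S: "subring S" and M: "ideal_of S M" and a: "a \<in> S"
  shows "ideal_of S {m + a * s | m s. m \<in> M \<and> s \<in> S}" (is "ideal_of S ?J")
proof -
  have MS: "M \<subseteq> S" using ideal_sub[OF M] .
  have sub: "?J \<subseteq> S" using MS a sub_closed[OF S] by blast
  have z: "0 \<in> ?J"
  proof -
    have "(0::'a) = 0 + a * 0 \<and> 0 \<in> M \<and> 0 \<in> S" using ideal_0[OF M] sub01[OF S] by simp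
    then show ?thesis by blast
  qed
  have cl: "x + y \<in> ?J \<and> x - y \<in> ?J" if xy: "x \<in> ?J" "y \<in> ?J" for x y
  proof -
    obtain m s where ms: "x = m + a*s" "m \<in> M" "s \<in> S" using xy(1) by blast
    obtain m' s' where ms': "y = m' + a*s'" "m' \<in> M" "s' \<in> S" using xy(2) by blast
    have "x + y = (m + m') + a * (s + s')" "x - y = (m - m') + a * (s - s')"
      unfolding ms ms' by (simp_all add: algebra_simps)
    moreover have "m + m' \<in> M" "m - m' \<in> M" using M ms ms' unfolding ideal_of_def by auto
    moreover have "s + s' \<in> S" "s - s' \<in> S" using sub_closed[OF S] ms ms' by auto
    ultimately show ?thesis by blast
  qed
  have ml: "r * x \<in> ?J" if rx: "r \<in> S" "x \<in> ?J" for r x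
  proof -
    obtain m s where ms: "x = m + a*s" "m \<in> M" "s \<in> S" using rx(2) by blast
    have "r * x = r * m + a * (r * s)" unfolding ms by (simp add: algebra_simps)
    moreover have "r * m \<in> M" using ideal_mem[OF M rx(1) ms(2)] .
    moreover have "r * s \<in> S" using sub_closed[OF S rx(1) ms(3)] by simp
    ultimately show ?thesis by blast
  qed
  show ?thesis unfolding ideal_of_def using sub z cl ml by blast
qed

lemma exists_prime:
  assumes S: "subring S" and I: "ideal_of S I" and one: "1 \<notin> I"
  shows "\<exists>M. prime_of S M \<and> I \<subseteq> M"
proof -
  define \<A> where "\<A> = {J. ideal_of S J \<and> I \<subseteq> J \<and> 1 \<notin> J}"
  have ne: "\<A> \<noteq> {}" using I one unfolding \<A>_def by blast
  have ch: "\<Union>C \<in> \<A>" if C: "C \<noteq> {}" "subset.chain \<A> C" for C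
  proof -
    have CA: "C \<subseteq> \<A>" and lin: "\<forall>X\<in>C. \<forall>Y\<in>C. X \<subseteq> Y \<or> Y \<subseteq> X"
      using C(2) unfolding subset.chain_def by auto
    obtain X0 where X0: "X0 \<in> C" using C(1) by blast
    have idl: "ideal_of S X" if "X \<in> C" for X using that CA unfolding \<A>_def by blast
    have "ideal_of S (\<Union>C)" unfolding ideal_of_def
    proof (intro conjI ballI)
      show "\<Union>C \<subseteq> S" using idl ideal_sub by blast
      show "0 \<in> \<Union>C" using idl[OF X0] ideal_0 X0 by blast
    next
      fix x y assume x: "x \<in> \<Union>C" and y: "y \<in> \<Union>C"
      then obtain X Y where XY: "X \<in> C" "Y \<in> C" "x \<in> X" "y \<in> Y" by blast
      then obtain Z where Z: "Z \<in> C" "x \<in> Z" "y \<in> Z" using lin by blast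
      show "x + y \<in> \<Union>C" "x - y \<in> \<Union>C" using idl[OF Z(1)] Z unfolding ideal_of_def by auto
    next
      fix a x assume a: "a \<in> S" and x: "x \<in> \<Union>C"
      then obtain X where "X \<in> C" "x \<in> X" by blast
      then show "a * x \<in> \<Union>C" using ideal_mem[OF idl a] by blast
    qed
    moreover have "I \<subseteq> \<Union>C" using X0 CA unfolding \<A>_def by blast
    moreover have "1 \<notin> \<Union>C" using CA unfolding \<A>_def by blast
    ultimately show ?thesis unfolding \<A>_def by blast
  qed
  obtain M where M: "M \<in> \<A>" and max: "\<forall>X\<in>\<A>. M \<subseteq> X \<longrightarrow> X = M"
    using subset_Zorn_nonempty[OF ne ch] by blast
  have Mi: "ideal_of S M" and IM: "I \<subseteq> M" and M1: "1 \<notin> M" using M unfolding \<A>_def by auto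
  have gen: "\<exists>m s. 1 = m + a * s \<and> m \<in> M \<and> s \<in> S" if a: "a \<in> S" "a \<notin> M" for a
  proof (rule ccontr)
    assume nn: "\<not> ?thesis"
    let ?J = "{m + a * s | m s. m \<in> M \<and> s \<in> S}"
    have Ji: "ideal_of S ?J" using ext_ideal[OF S Mi a(1)] .
    have MJ: "M \<subseteq> ?J"
    proof
      fix m assume "m \<in> M"
      then have "m = m + a * 0 \<and> m \<in> M \<and> 0 \<in> S" using sub01[OF S] by simp
      then show "m \<in> ?J" by blast
    qed
    have "1 \<notin> ?J" using nn by blast
    then have "?J \<in> \<A>" using Ji MJ IM unfolding \<A>_def by blast
    then have "?J = M" using max MJ by blast
    moreover have "a \<in> ?J"
    proof -
      have "a = 0 + a * 1 \<and> 0 \<in> M \<and> 1 \<in> S" using ideal_0[OF Mi] sub01[OF S] by simp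
      then show ?thesis by blast
    qed
    ultimately show False using a by blast
  qed
  have "prime_of S M" unfolding prime_of_def
  proof (intro conjI ballI impI)
    show "ideal_of S M" by fact
    show "M \<noteq> S" using M1 sub01[OF S] by blast
  next
    fix a b assume a: "a \<in> S" and b: "b \<in> S" and ab: "a * b \<in> M"
    show "a \<in> M \<or> b \<in> M"
    proof (rule ccontr)
      assume "\<not> ?thesis"
      then have na: "a \<notin> M" and nb: "b \<notin> M" by auto
      obtain m1 s1 where 1: "1 = m1 + a * s1" "m1 \<in> M" "s1 \<in> S" using gen[OF a na] by blast
      obtain m2 s2 where 2: "1 = m2 + b * s2" "m2 \<in> M" "s2 \<in> S" using gen[OF b nb] by blast
      have MS: "M \<subseteq> S" using ideal_sub[OF Mi] .
      have "(1::'a) = 1 * 1" by simp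
      also have "... = (m1 + a * s1) * (m2 + b * s2)" using 1 2 by simp
      also have "... = m2 * m1 + (b * s2) * m1 + (a * s1) * m2 + (s1 * s2) * (a * b)"
        by (simp add: algebra_simps)
      finally have eq: "(1::'a) = m2 * m1 + (b * s2) * m1 + (a * s1) * m2 + (s1 * s2) * (a * b)" .
      have t1: "m2 * m1 \<in> M" using ideal_mem[OF Mi _ 1(2)] 2(2) MS by blast
      have t2: "(b * s2) * m1 \<in> M" using ideal_mem[OF Mi _ 1(2)] sub_closed(3)[OF S b 2(3)] by blast
      have t3: "(a * s1) * m2 \<in> M" using ideal_mem[OF Mi _ 2(2)] sub_closed(3)[OF S a 1(3)] by blast
      have t4: "(s1 * s2) * (a * b) \<in> M" using ideal_mem[OF Mi _ ab] sub_closed(3)[OF S 1(3) 2(3)] by blast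
      have "m2 * m1 + (b * s2) * m1 + (a * s1) * m2 + (s1 * s2) * (a * b) \<in> M"
        using t1 t2 t3 t4 ideal_add[OF Mi] by blast
      then show False using eq M1 by simp
    qed
  qed
  then show ?thesis using IM by blast
qed

lemma gen_ideal_ideal:
  assumes S: "subring S" and X: "X \<subseteq> S"
  shows "ideal_of S (gen_ideal S X)" and "X \<subseteq> gen_ideal S X"
proof -
  have SS: "ideal_of S S" unfolding ideal_of_def using sub01[OF S] sub_closed[OF S] by auto
  let ?F = "{I. ideal_of S I \<and> X \<subseteq> I}"
  have F: "S \<in> ?F" using SS X by blast
  show "X \<subseteq> gen_ideal S X" unfolding gen_ideal_def by blast
  define J where "J = \<Inter>?F"
  have "ideal_of S J" unfolding ideal_of_def
  proof (intro conjI ballI)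
    show "J \<subseteq> S" using F unfolding J_def by blast
    show "0 \<in> J" using ideal_0 unfolding J_def by blast
  next
    fix x y assume "x \<in> J" "y \<in> J"
    then show "x + y \<in> J" "x - y \<in> J" unfolding J_def ideal_of_def by auto
  next
    fix a x assume "a \<in> S" "x \<in> J"
    then show "a * x \<in> J" using ideal_mem unfolding J_def by blast
  qed
  then show "ideal_of S (gen_ideal S X)" unfolding gen_ideal_def J_def .
qed

lemma gen_ideal_least: "ideal_of S I \<Longrightarrow> X \<subseteq> I \<Longrightarrow> gen_ideal S X \<subseteq> I"
  unfolding gen_ideal_def by blast

lemma ideal_one: assumes "ideal_of S I" "1 \<in> I" shows "I = S"
proof -
  have "a \<in> I" if "a \<in> S" for a using ideal_mem[OF assms(1) that assms(2)] by simp
  then show ?thesis using ideal_sub[OF assms(1)] by blast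
qed

lemma contract_h1:
  assumes R: "subring R" and ov: "overring R S" and gd: "going_down R S"
    and Q: "height_one_prime S Q"
  shows "height_one_prime R (Q \<inter> R)"
proof -
  have S: "subring S" and RS: "R \<subseteq> S" using ov unfolding overring_def by auto
  have Qp: "prime_of S Q" and Q0: "Q \<noteq> {0}" and Qm: "\<forall>P. prime_of S P \<and> P \<subseteq> Q \<and> P \<noteq> {0} \<longrightarrow> P = Q"
    using Q unfolding height_one_prime_def by auto
  have qp: "prime_of R (Q \<inter> R)" using contract_prime[OF R S RS Qp] .
  have q0: "Q \<inter> R \<noteq> {0}" using contract_nonzero[OF R ov Qp Q0] .
  have "p' = Q \<inter> R" if p': "prime_of R p'" "p' \<subseteq> Q \<inter> R" "p' \<noteq> {0}" for p'
  proof -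
    obtain P where P: "prime_of S P" "P \<subseteq> Q" "P \<inter> R = p'"
      using gd p' qp Qp unfolding going_down_def by blast
    have "P \<noteq> {0}" using P(3) p'(3) prime_0[OF p'(1)] by blast
    then have "P = Q" using Qm P by blast
    then show ?thesis using P by blast
  qed
  then show ?thesis unfolding height_one_prime_def using qp q0 by blast
qed

theorem proposition3p9:
  fixes R S :: "'k::field set"
  assumes "subring R" and "R1 R"
    and "overring R S" and "going_down R S"
  shows "R1 S \<and> (\<forall>Q \<in> Spec1 S. Q \<inter> R \<in> Spec1 R) \<and>
         inj_on (\<lambda>Q. Q \<inter> R) (Spec1 S) \<and>
         (\<lambda>Q. Q \<inter> R) ` Spec1 S = {p \<in> Spec1 R. gen_ideal S p \<noteq> S}"
proof -
  note R = assms(1) and R1 = assms(2) and ov = assms(3) and gd = assms(4)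
  have S: "subring S" and RS: "R \<subseteq> S" and SK: "S \<subseteq> frac_field R" using ov unfolding overring_def by auto
  have P2: "\<forall>Q \<in> Spec1 S. Q \<inter> R \<in> Spec1 R"
    using contract_h1[OF R ov gd] unfolding Spec1_def by blast
  have P1: "R1 S" unfolding R1_def
  proof (intro allI impI)
    fix Q assume Q: "height_one_prime S Q"
    have Qp: "prime_of S Q" using Q unfolding height_one_prime_def by blast
    have q: "height_one_prime R (Q \<inter> R)" using contract_h1[OF R ov gd Q] .
    have sub: "subring (localization S Q)" using loc_sub[OF S Qp] .
    have LK: "localization S Q \<subseteq> frac_field R"
    proof
      fix x assume "x \<in> localization S Q"
      then obtain a t where "x = a / t" "a \<in> S" "t \<in> S" unfolding localization_def by auto
      then show "x \<in> frac_field R" using frac_div[OF R] SK by blast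
    qed
    have FK: "frac_field (localization S Q) \<subseteq> frac_field R"
    proof
      fix x assume "x \<in> frac_field (localization S Q)"
      then obtain a t where "x = a / t" "a \<in> localization S Q" "t \<in> localization S Q"
        unfolding frac_field_def by auto
      then show "x \<in> frac_field R" using frac_div[OF R] LK by blast
    qed
    have RL: "localization R (Q \<inter> R) \<subseteq> localization S Q"
      unfolding localization_def using RS by blast
    show "valuation_domain (localization S Q)" unfolding valuation_domain_def
      using sub FK RL val_loc[OF R R1 q] by blast
  qed
  have P3: "inj_on (\<lambda>Q. Q \<inter> R) (Spec1 S)"
  proof (rule inj_onI)
    fix Q1 Q2 assume Q1: "Q1 \<in> Spec1 S" and Q2: "Q2 \<in> Spec1 S" and eq: "Q1 \<inter> R = Q2 \<inter> R"
    have h1: "height_one_prime S Q1" "height_one_prime S Q2" using Q1 Q2 unfolding Spec1_def by auto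
    have p1: "prime_of S Q1" "prime_of S Q2" using h1 unfolding height_one_prime_def by auto
    have k1: "Q1 = {x \<in> S. \<exists>a t. x = a / t \<and> a \<in> Q1 \<inter> R \<and> t \<in> R - (Q1 \<inter> R)}"
      using key[OF R R1 ov p1(1) contract_h1[OF R ov gd h1(1)]] by blast
    have k2: "Q2 = {x \<in> S. \<exists>a t. x = a / t \<and> a \<in> Q2 \<inter> R \<and> t \<in> R - (Q2 \<inter> R)}"
      using key[OF R R1 ov p1(2) contract_h1[OF R ov gd h1(2)]] by blast
    show "Q1 = Q2" using k1 k2 eq by simp
  qed
  have P4: "(\<lambda>Q. Q \<inter> R) ` Spec1 S = {p \<in> Spec1 R. gen_ideal S p \<noteq> S}"
  proof (intro equalityI subsetI)
    fix p assume "p \<in> (\<lambda>Q. Q \<inter> R) ` Spec1 S"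
    then obtain Q where Q: "Q \<in> Spec1 S" "p = Q \<inter> R" by blast
    have Qp: "prime_of S Q" using Q unfolding Spec1_def height_one_prime_def by blast
    have "gen_ideal S p \<subseteq> Q" using gen_ideal_least[of S Q p] Qp Q(2) unfolding prime_of_def by blast
    then have "1 \<notin> gen_ideal S p" using prime_one[OF S Qp] by blast
    then have "gen_ideal S p \<noteq> S" using sub01[OF S] by blast
    then show "p \<in> {p \<in> Spec1 R. gen_ideal S p \<noteq> S}" using P2 Q by blast
  next
    fix p assume "p \<in> {p \<in> Spec1 R. gen_ideal S p \<noteq> S}"
    then have hp: "height_one_prime R p" and ne: "gen_ideal S p \<noteq> S" unfolding Spec1_def by auto
    have pp: "prime_of R p" and p0: "p \<noteq> {0}" and pm: "\<forall>Q. prime_of R Q \<and> Q \<subseteq> p \<and> Q \<noteq> {0} \<longrightarrow> Q = p"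
      using hp unfolding height_one_prime_def by auto
    have pS: "p \<subseteq> S" using ideal_sub[of R p] pp RS unfolding prime_of_def by blast
    have gi: "ideal_of S (gen_ideal S p)" "p \<subseteq> gen_ideal S p" using gen_ideal_ideal[OF S pS] by auto
    have "1 \<notin> gen_ideal S p" using ideal_one[OF gi(1)] ne by blast
    then obtain M where M: "prime_of S M" "gen_ideal S p \<subseteq> M" using exists_prime[OF S gi(1)] by blast
    have qM: "prime_of R (M \<inter> R)" using contract_prime[OF R S RS M(1)] .
    have pM: "p \<subseteq> M \<inter> R" using M(2) gi(2) pp unfolding prime_of_def ideal_of_def by blast
    obtain P where P: "prime_of S P" "P \<subseteq> M" "P \<inter> R = p"
      using gd pp qM pM M(1) unfolding going_down_def by blast
    have P0: "P \<noteq> {0}" using P(3) p0 prime_0[OF pp] by blast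
    have kP: "P = {x \<in> S. \<exists>a t. x = a / t \<and> a \<in> P \<inter> R \<and> t \<in> R - (P \<inter> R)}"
      using key[OF R R1 ov P(1)] P(3) hp by blast
    have "P' = P" if P': "prime_of S P'" "P' \<subseteq> P" "P' \<noteq> {0}" for P'
    proof -
      have "P' \<inter> R = p" using pm contract_prime[OF R S RS P'(1)] contract_nonzero[OF R ov P'(1) P'(3)] P'(2) P(3) by blast
      then have "P' = {x \<in> S. \<exists>a t. x = a / t \<and> a \<in> P' \<inter> R \<and> t \<in> R - (P' \<inter> R)}"
        using key[OF R R1 ov P'(1)] hp by blast
      then show ?thesis using kP \<open>P' \<inter> R = p\<close> P(3) by simp
    qed
    then have "height_one_prime S P" unfolding height_one_prime_def using P(1) P0 by blast
    then show "p \<in> (\<lambda>Q. Q \<inter> R) ` Spec1 S" using P(3) unfolding Spec1_def by blast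
  qed
  show ?thesis using P1 P2 P3 P4 by blast
qed

end
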